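(* Consider the following $N$-atom clock estimation problem. Let $Q$ be the $(N+1)$-dimensional Hilbert space with orthonormal basis $|0\rangle,\dots,|N\rangle$, let $J_z|k\rangle=(k-N/2)|k\rangle$, and for $\omega\in\mathbb{R}$ let $\Omega(\omega)=e^{-iJ_z\omega}$. A $t_f$-query algorithm $\mathcal{Q}$ consists of a finite-dimensional ancilla system $A$, an initial state $\rho(0)$ on $Q\otimes A$, unitaries $U(1),\dots,U(t_f)$ on $Q\otimes A$, a POVM $\{P_a\}_a$ on $Q\otimes A$ with finitely many outcomes, and a real frequency estimate $f_a$ assigned to each outcome $a$. Given $\omega$, the final state is $\rho_\omega(t_f)=\Omega(\omega)U(t_f)\cdots\Omega(\omega)U(1)\,\rho(0)\,U(1)^\dagger\Omega(\omega)^\dagger\cdots U(t_f)^\dagger\Omega(\omega)^\dagger$ (with $\Omega(\omega)$ acting on $Q$ only), and $q(a|\omega,\mathcal{Q})=\mathrm{tr}(P_a\rho_\omega(t_f))$. For a probability density $p$ on $\mathbb{R}$ (the prior) and a cost function $C:\mathbb{R}\to\mathbb{R}$, the expected cost of $\mathcal{Q}$ is $\sum_a\int C(\omega-f_a)\,q(a|\omega,\mathcal{Q})\,p(\omega)\,d\omega$, and for a set $F\subseteq\mathbb{R}$, $S_C(p,F)$ denotes the infimum of the expected cost over all $t_f$-query algorithms whose estimates $f_a$ all lie in $F$. Let $C$ be twice differentiable and non-negative with $C''(x)\leq b$ for all $x$, $C(0)=0$, and $C$ monotone on $[0,\infty)$ and on $(-\infty,0]$. Let $F=\{f_1,\dots,f_n\}$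 with $f_1<f_2<\dots<f_n$, and define $M(\omega)=C(\omega-f_1)$ for $\omega\leq f_1$, $M(\omega)=C(\omega-f_n)$ for $\omega\geq f_n$, and $M(\omega)=0$ otherwise. Then $$S_C(p,F)-S_C(p,\mathbb{R})\leq \max_j \frac{b}{8}(f_{j+1}-f_j)^2+\int M(\omega)p(\omega)\,d\omega.$$ *)

theory Defs
  imports "HOL-Analysis.Analysis"
begin

text \<open>A D x D complex matrix is represented as a function nat => nat => complex;
  only entries with both indices below D are relevant.\<close>

type_synonym cmat = "nat \<Rightarrow> nat \<Rightarrow> complex"

definition mmul :: "nat \<Rightarrow> cmat \<Rightarrow> cmat \<Rightarrow> cmat" where
  "mmul D A B = (\<lambda>i j. \<Sum>k<D. A i k * B k j)"

definition adj :: "cmat \<Rightarrow> cmat" where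
  "adj A = (\<lambda>i j. cnj (A j i))"

definition idm :: cmat where
  "idm = (\<lambda>i j. if i = j then 1 else 0)"

definition mtrace :: "nat \<Rightarrow> cmat \<Rightarrow> complex" where
  "mtrace D A = (\<Sum>i<D. A i i)"

definition mat_eq :: "nat \<Rightarrow> cmat \<Rightarrow> cmat \<Rightarrow> bool" where
  "mat_eq D A B \<longleftrightarrow> (\<forall>i<D. \<forall>j<D. A i j = B i j)"

definition unitary_mat :: "nat \<Rightarrow> cmat \<Rightarrow> bool" where
  "unitary_mat D U \<longleftrightarrow> mat_eq D (mmul D U (adj U)) idm \<and> mat_eq D (mmul D (adj U) U) idm"

definition psd :: "nat \<Rightarrow> cmat \<Rightarrow> bool" where
  "psd D A \<longleftrightarrow> (\<forall>v :: nat \<Rightarrow> complex.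
     let z = (\<Sum>i<D. \<Sum>j<D. cnj (v i) * A i j * v j) in Im z = 0 \<and> Re z \<ge> 0)"

definition density_mat :: "nat \<Rightarrow> cmat \<Rightarrow> bool" where
  "density_mat D \<rho> \<longleftrightarrow> psd D \<rho> \<and> mtrace D \<rho> = 1"

definition povm :: "nat \<Rightarrow> nat \<Rightarrow> (nat \<Rightarrow> cmat) \<Rightarrow> bool" where
  "povm D m P \<longleftrightarrow> (\<forall>a<m. psd D (P a)) \<and> mat_eq D (\<lambda>i j. \<Sum>a<m. P a i j) idm"

text \<open>The space Q (x) A with dim Q = N+1 (basis |0>..|N>) and dim A = d is identified
  with C^((N+1) d) via |k> (x) |r>  \<mapsto>  index k*d + r.  The operator
  Omega(omega) (x) I_A, with Omega(omega) = exp(-i J_z omega), J_z|k> = (k - N/2)|k>,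
  is diagonal with entry exp(-i (k - N/2) omega) at index k*d + r.\<close>

definition Omega_full :: "nat \<Rightarrow> nat \<Rightarrow> real \<Rightarrow> cmat" where
  "Omega_full N d \<omega> = (\<lambda>i j. if i = j
      then exp (- \<i> * complex_of_real ((real (i div d) - real N / 2) * \<omega>)) else 0)"

record qalg =
  anc_dim :: nat
  init_state :: cmat
  unitaries :: "cmat list"
  n_outcomes :: nat
  povm_el :: "nat \<Rightarrow> cmat"
  estimate :: "nat \<Rightarrow> real"

definition alg_dim :: "nat \<Rightarrow> qalg \<Rightarrow> nat" where
  "alg_dim N Q = (N + 1) * anc_dim Q"

definition valid_alg :: "nat \<Rightarrow> nat \<Rightarrow> real set \<Rightarrow> qalg \<Rightarrow> bool" where
  "valid_alg N tf F Q \<longleftrightarrow>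
     anc_dim Q \<ge> 1 \<and>
     density_mat (alg_dim N Q) (init_state Q) \<and>
     length (unitaries Q) = tf \<and>
     (\<forall>U \<in> set (unitaries Q). unitary_mat (alg_dim N Q) U) \<and>
     povm (alg_dim N Q) (n_outcomes Q) (povm_el Q) \<and>
     (\<forall>a < n_outcomes Q. estimate Q a \<in> F)"

definition final_state :: "nat \<Rightarrow> qalg \<Rightarrow> real \<Rightarrow> cmat" where
  "final_state N Q \<omega> =
     (let D = alg_dim N Q; Om = Omega_full N (anc_dim Q) \<omega> in
      foldl (\<lambda>\<rho> U. let W = mmul D Om U in mmul D (mmul D W \<rho>) (adj W))
            (init_state Q) (unitaries Q))"

text \<open>q(a | omega, Q) = tr(P_a rho_omega(t_f)) (a real number for valid algorithms).\<close>
definition outcome_prob :: "nat \<Rightarrow> qalg \<Rightarrow> nat \<Rightarrow> real \<Rightarrow> real" where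
  "outcome_prob N Q a \<omega> = Re (mtrace (alg_dim N Q) (mmul (alg_dim N Q) (povm_el Q a) (final_state N Q \<omega>)))"

text \<open>Expected cost (integrand is non-negative, so the non-negative Lebesgue integral is used).\<close>
definition expected_cost :: "nat \<Rightarrow> (real \<Rightarrow> real) \<Rightarrow> (real \<Rightarrow> real) \<Rightarrow> qalg \<Rightarrow> ennreal" where
  "expected_cost N C p Q =
     (\<Sum>a < n_outcomes Q. \<integral>\<^sup>+ \<omega>. ennreal (C (\<omega> - estimate Q a) * outcome_prob N Q a \<omega> * p \<omega>) \<partial>lborel)"

definition S_C :: "nat \<Rightarrow> nat \<Rightarrow> (real \<Rightarrow> real) \<Rightarrow> (real \<Rightarrow> real) \<Rightarrow> real set \<Rightarrow> ennreal" where
  "S_C N tf C p F = (INF Q \<in> {Q. valid_alg N tf F Q}. expected_cost N C p Q)"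

definition prob_density :: "(real \<Rightarrow> real) \<Rightarrow> bool" where
  "prob_density p \<longleftrightarrow> p \<in> borel_measurable borel \<and> (\<forall>x. p x \<ge> 0) \<and>
     (\<integral>\<^sup>+ x. ennreal (p x) \<partial>lborel) = 1"

end

theory Submission
  imports Defs
begin


definition sesq :: "nat \<Rightarrow> cmat \<Rightarrow> (nat \<Rightarrow> complex) \<Rightarrow> (nat \<Rightarrow> complex) \<Rightarrow> complex" where
  "sesq D A u v = (\<Sum>i<D. \<Sum>j<D. cnj (u i) * A i j * v j)"

definition ev :: "nat \<Rightarrow> nat \<Rightarrow> complex" where "ev k = (\<lambda>i. if i = k then 1 else 0)"

lemma ev_l: "cnj (ev k i) * a = (if i = k then a else 0)" by (simp add: ev_def)
lemma ev_r: "a * ev k i = (if i = k then a else 0)" by (simp add: ev_def)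

lemma if_mult0[simp]: "(if P then a else 0) * (b::complex) = (if P then a * b else 0)" by simp
lemma sum_if0[simp]: "(\<Sum>j\<in>S. if P then f j else (0::complex)) = (if P then sum f S else 0)" by simp

lemma psd_sesq: "psd D A \<longleftrightarrow> (\<forall>v. Im (sesq D A v v) = 0 \<and> Re (sesq D A v v) \<ge> 0)"
  by (simp add: psd_def sesq_def Let_def)

lemma sesq_add_l: "sesq D A (\<lambda>i. u i + w i) v = sesq D A u v + sesq D A w v"
  by (simp add: sesq_def distrib_left distrib_right sum.distrib)
lemma sesq_add_r: "sesq D A u (\<lambda>i. v i + w i) = sesq D A u v + sesq D A u w"
  by (simp add: sesq_def distrib_left distrib_right sum.distrib)
lemma sesq_smult_l: "sesq D A (\<lambda>i. c * u i) v = cnj c * sesq D A u v"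
  by (simp add: sesq_def sum_distrib_left mult_ac)
lemma sesq_smult_r: "sesq D A u (\<lambda>i. c * v i) = c * sesq D A u v"
  by (simp add: sesq_def sum_distrib_left mult_ac)
lemma sesq_ev: "i < D \<Longrightarrow> j < D \<Longrightarrow> sesq D A (ev i) (ev j) = A i j"
  by (simp add: sesq_def ev_l ev_r)
lemma sesq_ev_l: "i < D \<Longrightarrow> sesq D A (ev i) v = (\<Sum>j<D. A i j * v j)"
  by (simp add: sesq_def ev_l ev_r)
lemma sesq_ev_r: "j < D \<Longrightarrow> sesq D A u (ev j) = (\<Sum>i<D. cnj (u i) * A i j)"
  by (simp add: sesq_def ev_l ev_r)

lemma psd_diag: assumes "psd D A" "i < D" shows "Im (A i i) = 0" "Re (A i i) \<ge> 0"
  using assms sesq_ev[of i D i A] unfolding psd_sesq by metis+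

lemma psd_herm: assumes "psd D A" "i < D" "j < D" shows "A j i = cnj (A i j)"
proof -
  have e1: "sesq D A (\<lambda>k. ev i k + ev j k) (\<lambda>k. ev i k + ev j k) = A i i + A i j + A j i + A j j"
    by (simp add: sesq_add_l sesq_add_r sesq_ev assms)
  have e2: "sesq D A (\<lambda>k. ev i k + \<i> * ev j k) (\<lambda>k. ev i k + \<i> * ev j k) = A i i + \<i> * A i j - \<i> * A j i + A j j"
    by (simp add: sesq_add_l sesq_add_r sesq_smult_l sesq_smult_r sesq_ev assms algebra_simps)
  have "Im (sesq D A (\<lambda>k. ev i k + ev j k) (\<lambda>k. ev i k + ev j k)) = 0"
       "Im (sesq D A (\<lambda>k. ev i k + \<i> * ev j k) (\<lambda>k. ev i k + \<i> * ev j k)) = 0"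
    using assms(1) unfolding psd_sesq by blast+
  with e1 e2 psd_diag[OF assms(1,2)] psd_diag[OF assms(1,3)] show ?thesis
    by (simp add: complex_eq_iff)
qed

lemma sesq_restrict: "sesq (Suc n) A (\<lambda>k. if k < n then v k else 0) (\<lambda>k. if k < n then v k else 0) = sesq n A v v"
  unfolding sesq_def by (simp add: sum.lessThan_Suc)

lemma psd_restrict: "psd (Suc n) A \<Longrightarrow> psd n A"
  unfolding psd_sesq by (metis sesq_restrict)

lemma psd_zero_diag: assumes "psd D A" "n < D" "A n n = 0" "j < D" shows "A n j = 0"
proof (rule ccontr)
  assume a0: "A n j \<noteq> 0"
  define a where "a = A n j"
  have jn: "j \<noteq> n" using a0 assms by auto
  have h: "A j n = cnj a" using psd_herm[OF assms(1,2,4)] a_def by simp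
  define t where "t = (Re (A j j) + 1) / (2 * (cmod a)^2)"
  define x where "x = - (complex_of_real t) * a"
  have e: "sesq D A (\<lambda>k. x * ev n k + ev j k) (\<lambda>k. x * ev n k + ev j k) = cnj x * x * A n n + cnj x * a + x * cnj a + A j j"
    by (simp add: sesq_add_l sesq_add_r sesq_smult_l sesq_smult_r sesq_ev assms a_def h algebra_simps)
  have "Re (sesq D A (\<lambda>k. x * ev n k + ev j k) (\<lambda>k. x * ev n k + ev j k)) \<ge> 0"
    using assms(1) unfolding psd_sesq by blast
  moreover have "Re (cnj x * a + x * cnj a) = - 2 * t * (cmod a)^2"
    by (simp add: x_def algebra_simps power2_eq_square cmod_def)
  moreover have "2 * t * (cmod a)^2 = Re (A j j) + 1" using a0 a_def by (simp add: t_def)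
  ultimately show False using e assms(3) by simp
qed

lemma psd_schur:
  assumes psd: "psd (Suc n) A" and r: "A n n = complex_of_real r" and rpos: "r > 0"
  defines "w \<equiv> (\<lambda>i. A i n / complex_of_real (sqrt r))"
  shows "psd (Suc n) (\<lambda>i j. A i j - w i * cnj (w j))"
proof -
  let ?D = "Suc n"
  let ?A' = "(\<lambda>i j. A i j - w i * cnj (w j))"
  have sr: "sqrt r > 0" using rpos by simp
  have srr: "complex_of_real (sqrt r) * complex_of_real (sqrt r) = complex_of_real r"
    using rpos by (simp flip: of_real_mult)
  have nz: "complex_of_real (sqrt r) \<noteq> 0" using sr by simp
  show ?thesis unfolding psd_sesq
  proof
    fix v
    define T where "T = (\<Sum>i<?D. cnj (v i) * w i)"
    have e1: "sesq ?D ?A' v v = sesq ?D A v v - T * cnj T"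
    proof -
      have "sesq ?D ?A' v v = sesq ?D A v v - (\<Sum>i<?D. \<Sum>j<?D. cnj (v i) * w i * (cnj (w j) * v j))"
        by (simp add: sesq_def algebra_simps sum_subtractf del: sum.lessThan_Suc)
      also have "(\<Sum>i<?D. \<Sum>j<?D. cnj (v i) * w i * (cnj (w j) * v j)) = T * cnj T"
        unfolding T_def cnj_sum sum_product by (simp add: mult_ac del: sum.lessThan_Suc)
      finally show ?thesis .
    qed
    define t where "t = - cnj T / complex_of_real (sqrt r)"
    have s1: "sesq ?D A v (ev n) = complex_of_real (sqrt r) * T"
      unfolding T_def w_def sesq_ev_r[OF lessI] sum_distrib_left
      by (rule sum.cong) (use nz in auto)
    have s2: "sesq ?D A (ev n) v = complex_of_real (sqrt r) * cnj T"
    proof -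
      have "sesq ?D A (ev n) v = (\<Sum>j<?D. cnj (A j n) * v j)"
        unfolding sesq_ev_l[OF lessI]
        apply (rule sum.cong, simp)
        subgoal for x using psd_herm[OF psd, of x n] by simp
        done
      thus ?thesis unfolding T_def w_def cnj_sum sum_distrib_left
        by (simp del: sum.lessThan_Suc) (rule sum.cong, use nz in auto)
    qed
    have "sesq ?D A (\<lambda>k. v k + t * ev n k) (\<lambda>k. v k + t * ev n k)
        = sesq ?D A v v + t * sesq ?D A v (ev n) + cnj t * sesq ?D A (ev n) v + cnj t * t * A n n"
      by (simp add: sesq_add_l sesq_add_r sesq_smult_l sesq_smult_r sesq_ev algebra_simps)
    also have "\<dots> = sesq ?D A v v - T * cnj T"
    proof -
      have ct: "cnj t = - T / complex_of_real (sqrt r)" unfolding t_def by simp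
      show ?thesis unfolding s1 s2 r ct unfolding t_def using nz srr
        by (simp add: field_simps)
    qed
    finally have "sesq ?D ?A' v v = sesq ?D A (\<lambda>k. v k + t * ev n k) (\<lambda>k. v k + t * ev n k)"
      using e1 by simp
    thus "Im (sesq ?D ?A' v v) = 0 \<and> 0 \<le> Re (sesq ?D ?A' v v)"
      using psd unfolding psd_sesq by metis
  qed
qed

lemma psd_split: assumes "psd (Suc n) A"
  shows "\<exists>w A'. psd (Suc n) A' \<and> A' n n = 0 \<and> (\<forall>i j. A i j = A' i j + w i * cnj (w j))"
proof -
  define r where "r = Re (A n n)"
  have Ar: "A n n = complex_of_real r" using psd_diag[OF assms, of n] r_def by (simp add: complex_eq_iff)
  have r0: "r \<ge> 0" using psd_diag[OF assms, of n] r_def by simp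
  show ?thesis
  proof (cases "r = 0")
    case True
    thus ?thesis using assms Ar by (intro exI[of _ "\<lambda>_. 0"] exI[of _ A]) auto
  next
    case False
    hence rpos: "r > 0" using r0 by simp
    define w where "w \<equiv> (\<lambda>i. A i n / complex_of_real (sqrt r))"
    have "psd (Suc n) (\<lambda>i j. A i j - w i * cnj (w j))" unfolding w_def by (rule psd_schur[OF assms Ar rpos])
    moreover have "A n n - w n * cnj (w n) = 0"
    proof -
      have "w n * cnj (w n) = A n n * A n n / (complex_of_real (sqrt r) * complex_of_real (sqrt r))"
        unfolding w_def Ar by simp
      also have "\<dots> = A n n" unfolding Ar using rpos by (simp flip: of_real_mult of_real_divide)
      finally show ?thesis by simp
    qed
    ultimately show ?thesis by (intro exI[of _ w] exI[of _ "\<lambda>i j. A i j - w i * cnj (w j)"]) auto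
  qed
qed

lemma psd_decomp: "psd D A \<Longrightarrow> \<exists>c. \<forall>i<D. \<forall>j<D. A i j = (\<Sum>k<D. c k i * cnj (c k j))"
proof (induction D arbitrary: A)
  case 0 thus ?case by simp
next
  case (Suc n)
  obtain w A' where A': "psd (Suc n) A'" "A' n n = 0" "\<And>i j. A i j = A' i j + w i * cnj (w j)"
    using psd_split[OF Suc.prems] by blast
  have z1: "A' n j = 0" if "j < Suc n" for j using psd_zero_diag[OF A'(1) _ A'(2) that] by simp
  have z2: "A' i n = 0" if "i < Suc n" for i using psd_herm[OF A'(1) that, of n] z1[OF that] by simp
  obtain c where c: "\<forall>i<n. \<forall>j<n. A' i j = (\<Sum>k<n. c k i * cnj (c k j))"
    using Suc.IH[OF psd_restrict[OF A'(1)]] by blast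
  define c' where "c' = (\<lambda>k i. if k < n then (if i < n then c k i else 0) else w i)"
  have "A i j = (\<Sum>k<Suc n. c' k i * cnj (c' k j))" if "i < Suc n" "j < Suc n" for i j
  proof -
    have "(\<Sum>k<Suc n. c' k i * cnj (c' k j)) = (\<Sum>k<n. c' k i * cnj (c' k j)) + w i * cnj (w j)"
      by (simp add: c'_def)
    moreover have "(\<Sum>k<n. c' k i * cnj (c' k j)) = A' i j"
    proof (cases "i < n \<and> j < n")
      case True thus ?thesis using c by (simp add: c'_def)
    next
      case False
      hence "i = n \<or> j = n" using that by auto
      thus ?thesis using z1 z2 that by (auto simp: c'_def)
    qed
    ultimately show ?thesis using A'(3) by simp
  qed
  thus ?case by blast
qed

lemma trace_psd_nonneg: assumes P: "psd D P" and R: "psd D R"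
  shows "Re (mtrace D (mmul D P R)) \<ge> 0"
proof -
  obtain c where c: "\<forall>i<D. \<forall>j<D. R i j = (\<Sum>k<D. c k i * cnj (c k j))"
    using psd_decomp[OF R] by blast
  have "mtrace D (mmul D P R) = (\<Sum>i<D. \<Sum>k<D. P i k * (\<Sum>m<D. c m k * cnj (c m i)))"
    unfolding mtrace_def mmul_def using c by (intro sum.cong refl) auto
  also have "\<dots> = (\<Sum>i<D. \<Sum>k<D. \<Sum>m<D. cnj (c m i) * P i k * c m k)"
    by (simp add: sum_distrib_left mult_ac)
  also have "\<dots> = (\<Sum>i<D. \<Sum>m<D. \<Sum>k<D. cnj (c m i) * P i k * c m k)"
    by (rule sum.cong[OF refl], rule sum.swap)
  also have "\<dots> = (\<Sum>m<D. \<Sum>i<D. \<Sum>k<D. cnj (c m i) * P i k * c m k)"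
    by (rule sum.swap)
  also have "\<dots> = (\<Sum>m<D. sesq D P (c m) (c m))" by (simp add: sesq_def)
  finally have "Re (mtrace D (mmul D P R)) = (\<Sum>m<D. Re (sesq D P (c m) (c m)))" by simp
  also have "\<dots> \<ge> 0" using P unfolding psd_sesq by (intro sum_nonneg) auto
  finally show ?thesis .
qed

lemma sesq_mmul_l: "sesq D (mmul D X Y) u v = sesq D Y (\<lambda>k. \<Sum>i<D. cnj (X i k) * u i) v"
proof -
  have "sesq D (mmul D X Y) u v = (\<Sum>i<D. \<Sum>j<D. \<Sum>k<D. cnj (u i) * X i k * Y k j * v j)"
    by (simp add: sesq_def mmul_def sum_distrib_left sum_distrib_right mult_ac)
  also have "\<dots> = (\<Sum>i<D. \<Sum>k<D. \<Sum>j<D. cnj (u i) * X i k * Y k j * v j)"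
    by (rule sum.cong[OF refl], rule sum.swap)
  also have "\<dots> = (\<Sum>k<D. \<Sum>i<D. \<Sum>j<D. cnj (u i) * X i k * Y k j * v j)"
    by (rule sum.swap)
  also have "\<dots> = (\<Sum>k<D. \<Sum>j<D. \<Sum>i<D. cnj (u i) * X i k * Y k j * v j)"
    by (rule sum.cong[OF refl], rule sum.swap)
  also have "\<dots> = sesq D Y (\<lambda>k. \<Sum>i<D. cnj (X i k) * u i) v"
    by (simp add: sesq_def cnj_sum sum_distrib_left sum_distrib_right mult_ac)
  finally show ?thesis .
qed

lemma sesq_mmul_r: "sesq D (mmul D Y X) u v = sesq D Y u (\<lambda>l. \<Sum>j<D. X l j * v j)"
proof -
  have "sesq D (mmul D Y X) u v = (\<Sum>i<D. \<Sum>j<D. \<Sum>l<D. cnj (u i) * Y i l * X l j * v j)"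
    by (simp add: sesq_def mmul_def sum_distrib_left sum_distrib_right mult_ac)
  also have "\<dots> = (\<Sum>i<D. \<Sum>l<D. \<Sum>j<D. cnj (u i) * Y i l * X l j * v j)"
    by (rule sum.cong[OF refl], rule sum.swap)
  also have "\<dots> = sesq D Y u (\<lambda>l. \<Sum>j<D. X l j * v j)"
    by (simp add: sesq_def sum_distrib_left sum_distrib_right mult_ac)
  finally show ?thesis .
qed

lemma psd_conj: assumes "psd D R" shows "psd D (mmul D (mmul D W R) (adj W))"
proof -
  have "sesq D (mmul D (mmul D W R) (adj W)) v v = sesq D R (\<lambda>k. \<Sum>i<D. cnj (W i k) * v i) (\<lambda>k. \<Sum>i<D. cnj (W i k) * v i)" for v
  proof -
    have "sesq D (mmul D (mmul D W R) (adj W)) v v = sesq D (mmul D W R) v (\<lambda>l. \<Sum>j<D. adj W l j * v j)" by (rule sesq_mmul_r)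
    also have "\<dots> = sesq D R (\<lambda>k. \<Sum>i<D. cnj (W i k) * v i) (\<lambda>l. \<Sum>j<D. adj W l j * v j)" by (rule sesq_mmul_l)
    also have "(\<lambda>l. \<Sum>j<D. adj W l j * v j) = (\<lambda>k. \<Sum>i<D. cnj (W i k) * v i)" by (simp add: adj_def)
    finally show ?thesis .
  qed
  thus ?thesis using assms unfolding psd_sesq by simp
qed

lemma mmul_assoc: "mmul D (mmul D A B) C = mmul D A (mmul D B C)"
proof -
  have "(\<Sum>k<D. (\<Sum>m<D. A i m * B m k) * C k j) = (\<Sum>m<D. A i m * (\<Sum>k<D. B m k * C k j))" for i j
  proof -
    have "(\<Sum>k<D. (\<Sum>m<D. A i m * B m k) * C k j) = (\<Sum>k<D. \<Sum>m<D. A i m * B m k * C k j)"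
      by (simp add: sum_distrib_right)
    also have "\<dots> = (\<Sum>m<D. \<Sum>k<D. A i m * B m k * C k j)" by (rule sum.swap)
    also have "\<dots> = (\<Sum>m<D. A i m * (\<Sum>k<D. B m k * C k j))" by (simp add: sum_distrib_left mult_ac)
    finally show ?thesis .
  qed
  thus ?thesis unfolding mmul_def by blast
qed

lemma mtrace_comm: "mtrace D (mmul D A B) = mtrace D (mmul D B A)"
  unfolding mtrace_def mmul_def by (subst sum.swap) (simp add: mult.commute)

lemma mtrace_eq: "mat_eq D X idm \<Longrightarrow> mtrace D (mmul D X R) = mtrace D R"
  unfolding mtrace_def mmul_def
proof (intro sum.cong refl)
  fix x assume x: "x \<in> {..<D}" and "mat_eq D X idm"
  hence "(\<Sum>k<D. X x k * R k x) = (\<Sum>k<D. (if x = k then R k x else 0))"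
    by (intro sum.cong refl) (auto simp: mat_eq_def idm_def)
  thus "(\<Sum>k<D. X x k * R k x) = R x x" using x by simp
qed

lemma mtrace_conj: assumes "mat_eq D (mmul D (adj W) W) idm"
  shows "mtrace D (mmul D (mmul D W R) (adj W)) = mtrace D R"
  by (metis assms mmul_assoc mtrace_comm mtrace_eq)

lemma omega_unit: "cnj (Omega_full N d w i i) * Omega_full N d w i i = 1"
  by (simp add: Omega_full_def exp_cnj flip: exp_add)

lemma mmul_diag: "i < D \<Longrightarrow> mmul D (Omega_full N d w) U i l = Omega_full N d w i i * U i l"
  unfolding mmul_def by (simp add: Omega_full_def)

lemma W_unitary: assumes "unitary_mat D U"
  shows "mat_eq D (mmul D (adj (mmul D (Omega_full N d w) U)) (mmul D (Omega_full N d w) U)) idm"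
proof -
  have "mmul D (adj (mmul D (Omega_full N d w) U)) (mmul D (Omega_full N d w) U) l k = mmul D (adj U) U l k" for l k
  proof -
    have "mmul D (adj (mmul D (Omega_full N d w) U)) (mmul D (Omega_full N d w) U) l k
       = (\<Sum>i<D. (cnj (Omega_full N d w i i) * Omega_full N d w i i) * (cnj (U i l) * U i k))"
      unfolding mmul_def[of D "adj (mmul D (Omega_full N d w) U)" "mmul D (Omega_full N d w) U"]
      unfolding adj_def
      apply (intro sum.cong refl)
      apply (simp add: mmul_diag mult_ac) done
    also have "\<dots> = mmul D (adj U) U l k" by (simp add: omega_unit mmul_def adj_def)
    finally show ?thesis .
  qed
  thus ?thesis using assms unfolding unitary_mat_def mat_eq_def by simp
qed

lemma foldl_density:
  assumes "\<forall>U\<in>set Us. unitary_mat D U" "psd D R" "mtrace D R = 1"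
  shows "psd D (foldl (\<lambda>\<rho> U. let W = mmul D (Omega_full N d w) U in mmul D (mmul D W \<rho>) (adj W)) R Us)
       \<and> mtrace D (foldl (\<lambda>\<rho> U. let W = mmul D (Omega_full N d w) U in mmul D (mmul D W \<rho>) (adj W)) R Us) = 1"
  using assms
proof (induction Us arbitrary: R)
  case Nil thus ?case by simp
next
  case (Cons U Us)
  let ?W = "mmul D (Omega_full N d w) U"
  have "psd D (mmul D (mmul D ?W R) (adj ?W))" using psd_conj Cons.prems by blast
  moreover have "mtrace D (mmul D (mmul D ?W R) (adj ?W)) = 1"
    using mtrace_conj[OF W_unitary] Cons.prems by simp
  ultimately show ?case using Cons.IH Cons.prems by (simp add: Let_def)
qed

lemma final_density: assumes "valid_alg N tf F Q"
  shows "psd (alg_dim N Q) (final_state N Q w) \<and> mtrace (alg_dim N Q) (final_state N Q w) = 1"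
  using assms unfolding valid_alg_def density_mat_def final_state_def Let_def
  using foldl_density[unfolded Let_def] by blast

lemma q_nonneg: assumes "valid_alg N tf F Q" "a < n_outcomes Q"
  shows "outcome_prob N Q a w \<ge> 0"
  using assms final_density[OF assms(1)] trace_psd_nonneg unfolding outcome_prob_def valid_alg_def povm_def
  by blast

lemma sum3_swap: "(\<Sum>a\<in>A. \<Sum>i\<in>B. \<Sum>k\<in>C. f a i k) = (\<Sum>i\<in>B. \<Sum>k\<in>C. \<Sum>a\<in>A. (f a i k :: complex))"
proof -
  have "(\<Sum>a\<in>A. \<Sum>i\<in>B. \<Sum>k\<in>C. f a i k) = (\<Sum>i\<in>B. \<Sum>a\<in>A. \<Sum>k\<in>C. f a i k)" by (rule sum.swap)
  also have "\<dots> = (\<Sum>i\<in>B. \<Sum>k\<in>C. \<Sum>a\<in>A. f a i k)" by (rule sum.cong[OF refl], rule sum.swap)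
  finally show ?thesis .
qed

lemma q_sum: assumes "valid_alg N tf F Q"
  shows "(\<Sum>a<n_outcomes Q. outcome_prob N Q a w) = 1"
proof -
  let ?D = "alg_dim N Q" and ?R = "final_state N Q w" and ?P = "povm_el Q"
  have "(\<Sum>a<n_outcomes Q. mtrace ?D (mmul ?D (?P a) ?R)) = mtrace ?D (mmul ?D (\<lambda>i j. \<Sum>a<n_outcomes Q. ?P a i j) ?R)"
    unfolding mtrace_def mmul_def sum_distrib_right by (rule sum3_swap)
  also have "\<dots> = 1" using assms final_density[OF assms] mtrace_eq unfolding valid_alg_def povm_def by metis
  finally show ?thesis unfolding outcome_prob_def by (metis Re_sum one_complex.sel(1))
qed



lemma taylor_le:
  fixes C :: "real \<Rightarrow> real"
  assumes diff1: "\<And>x. C differentiable (at x)"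
    and diff2: "\<And>x. deriv C differentiable (at x)"
    and bound: "\<And>x. deriv (deriv C) x \<le> b"
  shows "C y \<le> C u + deriv C u * (y - u) + b / 2 * (y - u)^2"
proof (cases "y = u")
  case True thus ?thesis by simp
next
  case False
  define df where "df = (\<lambda>m::nat. if m = 0 then C else if m = 1 then deriv C else deriv (deriv C))"
  have D: "\<forall>m t. m < 2 \<and> min y u \<le> t \<and> t \<le> max y u \<longrightarrow> DERIV (df m) t :> df (Suc m) t"
  proof (intro allI impI)
    fix m :: nat and t assume "m < 2 \<and> min y u \<le> t \<and> t \<le> max y u"
    hence "m = 0 \<or> m = 1" by auto
    thus "DERIV (df m) t :> df (Suc m) t"
      using diff1[of t] diff2[of t] by (auto simp: df_def DERIV_deriv_iff_real_differentiable)
  qed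
  have d0: "df 0 = C" by (simp add: df_def)
  obtain t where "C y = (\<Sum>m<2. df m u / fact m * (y - u)^m) + df 2 t / fact 2 * (y - u)^2"
    using Taylor[of 2 df C "min y u" "max y u" u y, OF _ d0 D] False by auto
  hence "C y = C u + deriv C u * (y - u) + deriv (deriv C) t / 2 * (y - u)^2"
    by (simp add: df_def numeral_2_eq_2)
  also have "\<dots> \<le> C u + deriv C u * (y - u) + b / 2 * (y - u)^2"
    using bound[of t] by (intro add_left_mono mult_right_mono divide_right_mono) auto
  finally show ?thesis .
qed

lemma interp_bound:
  fixes C :: "real \<Rightarrow> real"
  assumes diff1: "\<And>x. C differentiable (at x)"
    and diff2: "\<And>x. deriv C differentiable (at x)"
    and bound: "\<And>x. deriv (deriv C) x \<le> b"
    and f0: "f0 < f1" and f: "f0 \<le> f" "f \<le> f1"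
  defines "l \<equiv> (f1 - f) / (f1 - f0)"
  shows "l * C (w - f0) + (1 - l) * C (w - f1) \<le> C (w - f) + max 0 (b / 8 * (f1 - f0)^2)"
proof -
  let ?u = "w - f"
  have t0: "C (w - f0) \<le> C ?u + deriv C ?u * (f - f0) + b / 2 * (f - f0)^2"
    using taylor_le[OF diff1 diff2 bound, of "w - f0" ?u] by simp
  have t1: "C (w - f1) \<le> C ?u + deriv C ?u * (f - f1) + b / 2 * (f - f1)^2"
    using taylor_le[OF diff1 diff2 bound, of "w - f1" ?u] by simp
  have l0: "0 \<le> l" "l \<le> 1" using f f0 by (auto simp: l_def field_simps)
  have lin: "l * (f - f0) + (1 - l) * (f - f1) = 0" using f0 by (simp add: l_def field_simps)
  have quad: "l * (f - f0)^2 + (1 - l) * (f - f1)^2 = (f - f0) * (f1 - f)"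
  proof -
    have l1: "1 - l = (f - f0) / (f1 - f0)" using f0 by (simp add: l_def field_simps)
    have n: "(f1-f)*(f-f0)^2 + (f-f0)*(f1-f)^2 = ((f - f0) * (f1 - f)) * (f1 - f0)"
      by (simp add: power2_eq_square algebra_simps)
    have "l * (f - f0)^2 + (1 - l) * (f - f1)^2 = ((f1-f)*(f-f0)^2 + (f-f0)*(f1-f)^2) / (f1 - f0)"
      unfolding l1 by (simp add: l_def add_divide_distrib power2_commute)
    also have "\<dots> = (f - f0) * (f1 - f)" unfolding n using f0 by simp
    finally show ?thesis .
  qed
  have "l * C (w - f0) + (1 - l) * C (w - f1)
      \<le> l * (C ?u + deriv C ?u * (f - f0) + b / 2 * (f - f0)^2) + (1 - l) * (C ?u + deriv C ?u * (f - f1) + b / 2 * (f - f1)^2)"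
    using t0 t1 l0 by (intro add_mono mult_left_mono) auto
  also have "\<dots> = C ?u + deriv C ?u * (l * (f - f0) + (1 - l) * (f - f1)) + b / 2 * (l * (f - f0)^2 + (1 - l) * (f - f1)^2)"
    by (simp add: field_simps)
  also have "\<dots> = C ?u + b / 2 * ((f - f0) * (f1 - f))" unfolding lin quad by simp
  also have "\<dots> \<le> C ?u + max 0 (b / 8 * (f1 - f0)^2)"
  proof (cases "b \<ge> 0")
    case True
    have "(f - f0) * (f1 - f) \<le> (f1 - f0)^2 / 4"
    proof -
      have h: "0 \<le> (f0 + f1 - 2*f)^2" by simp
      have "(f1 - f0)^2 - 4 * ((f - f0) * (f1 - f)) = (f0 + f1 - 2*f)^2"
        by (simp add: power2_eq_square algebra_simps)
      hence "4 * ((f - f0) * (f1 - f)) \<le> (f1 - f0)^2" using h by linarith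
      thus ?thesis by simp
    qed
    hence "b / 2 * ((f - f0) * (f1 - f)) \<le> b / 2 * ((f1 - f0)^2 / 4)" using True by (intro mult_left_mono) auto
    thus ?thesis by simp
  next
    case False
    have "(f - f0) * (f1 - f) \<ge> 0" using f by simp
    hence "b / 2 * ((f - f0) * (f1 - f)) \<le> 0" using False by (simp add: mult_nonpos_nonneg)
    thus ?thesis by simp
  qed
  finally show ?thesis by simp
qed



lemma bracket_exists:
  fixes xs :: "real list"
  assumes "xs \<noteq> []" "hd xs \<le> f" "f \<le> last xs"
  shows "f \<in> set xs \<or> (\<exists>j. j + 1 < length xs \<and> xs ! j \<le> f \<and> f \<le> xs ! (j + 1))"
  using assms
proof (induction xs)
  case Nil thus ?case by simp
next
  case (Cons x ys)
  show ?case
  proof (cases "ys = []")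
    case True thus ?thesis using Cons.prems by simp
  next
    case False
    show ?thesis
    proof (cases "f \<le> hd ys")
      case True
      hence "0 + 1 < length (x # ys) \<and> (x # ys) ! 0 \<le> f \<and> f \<le> (x # ys) ! (0 + 1)"
        using False Cons.prems by (auto simp: hd_conv_nth)
      thus ?thesis by blast
    next
      case nle: False
      have "f \<in> set ys \<or> (\<exists>j. j + 1 < length ys \<and> ys ! j \<le> f \<and> f \<le> ys ! (j + 1))"
        using Cons.IH False nle Cons.prems by auto
      thus ?thesis
      proof
        assume "f \<in> set ys" thus ?thesis by simp
      next
        assume "\<exists>j. j + 1 < length ys \<and> ys ! j \<le> f \<and> f \<le> ys ! (j + 1)"
        then obtain j where "j + 1 < length ys" "ys ! j \<le> f" "f \<le> ys ! (j + 1)" by blast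
        hence "Suc j + 1 < length (x # ys) \<and> (x # ys) ! Suc j \<le> f \<and> f \<le> (x # ys) ! (Suc j + 1)" by simp
        thus ?thesis by blast
      qed
    qed
  qed
qed

lemma round_exists:
  fixes C :: "real \<Rightarrow> real" and fs :: "real list"
  assumes diff1: "\<And>x. C differentiable (at x)"
    and diff2: "\<And>x. deriv C differentiable (at x)"
    and bound: "\<And>x. deriv (deriv C) x \<le> b"
    and nonneg: "\<And>x. C x \<ge> 0"
    and C0: "C 0 = 0"
    and mono_pos: "mono_on {0..} C \<or> antimono_on {0..} C"
    and mono_neg: "mono_on {..0} C \<or> antimono_on {..0} C"
    and fs_ne: "fs \<noteq> []"
    and fs_sorted: "sorted_wrt (<) fs"
    and M_def: "M = (\<lambda>\<omega>. if \<omega> \<le> hd fs then C (\<omega> - hd fs)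
                 else if \<omega> \<ge> last fs then C (\<omega> - last fs) else 0)"
    and K_def: "K = Max (insert 0 {b / 8 * (fs ! (j + 1) - fs ! j)^2 | j. j + 1 < length fs})"
  shows "\<exists>g1 g2 l. g1 \<in> set fs \<and> g2 \<in> set fs \<and> 0 \<le> l \<and> l \<le> 1 \<and>
           (\<forall>w. l * C (w - g1) + (1 - l) * C (w - g2) \<le> C (w - f) + K + M w)"
proof -
  have fin: "finite {b / 8 * (fs ! (j + 1) - fs ! j)^2 | j. j + 1 < length fs}"
    by (rule finite_image_set, rule finite_subset[of _ "{..<length fs}"]) auto
  have K0: "K \<ge> 0" unfolding K_def using fin by simp
  have Kj: "K \<ge> b / 8 * (fs ! (j + 1) - fs ! j)^2" if "j + 1 < length fs" for j
    unfolding K_def using fin that by (intro Max_ge) auto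
  have M0: "M w \<ge> 0" for w unfolding M_def using nonneg by simp
  have hl: "hd fs \<le> last fs"
  proof (cases "length fs = 1")
    case True thus ?thesis by (cases fs) auto
  next
    case False
    have L: "length fs > 0" using fs_ne by simp
    hence "0 < length fs - 1" "length fs - 1 < length fs" using False by linarith+
    hence "fs ! 0 < fs ! (length fs - 1)" using fs_sorted by (simp add: sorted_wrt_nth_less)
    thus ?thesis using fs_ne by (simp add: hd_conv_nth last_conv_nth)
  qed
  show ?thesis
  proof (cases "f < hd fs")
    case True
    have "C (w - hd fs) \<le> C (w - f) + K + M w" for w
    proof (cases "w \<le> hd fs")
      case True thus ?thesis using nonneg[of "w - f"] K0 by (simp add: M_def)
    next
      case False
      have "C (w - hd fs) \<le> C (w - f)"
        using mono_pos
      proof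
        assume "mono_on {0..} C" thus ?thesis using mono_onD[of "{0..}" C "w - hd fs" "w - f"] False True by simp
      next
        assume "antimono_on {0..} C"
        hence "C (w - hd fs) \<le> C 0" using monotone_onD[of "{0..}" "(\<le>)" "\<lambda>x y. y \<le> x" C 0 "w - hd fs"] False by simp
        thus ?thesis using C0 nonneg[of "w - f"] by simp
      qed
      thus ?thesis using K0 M0[of w] by simp
    qed
    thus ?thesis using fs_ne by (intro exI[of _ "hd fs"] exI[of _ "hd fs"] exI[of _ 1]) auto
  next
    case nlt: False
    show ?thesis
    proof (cases "f > last fs")
      case True
      have "C (w - last fs) \<le> C (w - f) + K + M w" for w
      proof (cases "w \<ge> last fs")
        case True
        hence "M w = C (w - last fs)" unfolding M_def using hl by (cases "w \<le> hd fs") (simp_all, smt (verit))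
        thus ?thesis using nonneg[of "w - f"] K0 by simp
      next
        case False
        have "C (w - last fs) \<le> C (w - f)"
          using mono_neg
        proof
          assume "mono_on {..0} C"
          hence "C (w - last fs) \<le> C 0" using mono_onD[of "{..0}" C "w - last fs" 0] False by simp
          thus ?thesis using C0 nonneg[of "w - f"] by simp
        next
          assume "antimono_on {..0} C" thus ?thesis using monotone_onD[of "{..0}" "(\<le>)" "\<lambda>x y. y \<le> x" C "w - f" "w - last fs"] False True by simp
        qed
        thus ?thesis using K0 M0[of w] by simp
      qed
      thus ?thesis using fs_ne by (intro exI[of _ "last fs"] exI[of _ "last fs"] exI[of _ 1]) auto
    next
      case ngt: False
      have "f \<in> set fs \<or> (\<exists>j. j + 1 < length fs \<and> fs ! j \<le> f \<and> f \<le> fs ! (j + 1))"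
        using bracket_exists[OF fs_ne] nlt ngt by auto
      thus ?thesis
      proof
        assume "f \<in> set fs"
        thus ?thesis using K0 M0 by (intro exI[of _ f] exI[of _ f] exI[of _ 1]) auto
      next
        assume "\<exists>j. j + 1 < length fs \<and> fs ! j \<le> f \<and> f \<le> fs ! (j + 1)"
        then obtain j where j: "j + 1 < length fs" "fs ! j \<le> f" "f \<le> fs ! (j + 1)" by blast
        have lt: "fs ! j < fs ! (j + 1)" using fs_sorted j(1) by (simp add: sorted_wrt_nth_less)
        define l where "l = (fs ! (j + 1) - f) / (fs ! (j + 1) - fs ! j)"
        have l0: "0 \<le> l" "l \<le> 1" using j lt by (auto simp: l_def field_simps)
        have "l * C (w - fs ! j) + (1 - l) * C (w - fs ! (j + 1)) \<le> C (w - f) + K + M w" for w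
        proof -
          have "l * C (w - fs ! j) + (1 - l) * C (w - fs ! (j + 1)) \<le> C (w - f) + max 0 (b / 8 * (fs ! (j + 1) - fs ! j)^2)"
            unfolding l_def by (rule interp_bound[OF diff1 diff2 bound lt j(2,3)])
          also have "\<dots> \<le> C (w - f) + K + M w" using Kj[OF j(1)] K0 M0[of w] by simp
          finally show ?thesis .
        qed
        moreover have "fs ! j \<in> set fs" "fs ! (j + 1) \<in> set fs" using j(1) by auto
        ultimately show ?thesis using l0 by blast
      qed
    qed
  qed
qed



lemma cnj_meas[measurable]: "f \<in> borel_measurable M \<Longrightarrow> (\<lambda>x. cnj (f x :: complex)) \<in> borel_measurable M"
  by (rule measurable_compose[OF _ borel_measurable_continuous_onI]) (auto intro: continuous_intros)

lemma omega_meas: "(\<lambda>w. Omega_full N d w i j) \<in> borel_measurable borel"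
  unfolding Omega_full_def by measurable

lemma step_meas:
  assumes "\<And>i j. (\<lambda>w. R w i j) \<in> borel_measurable borel"
  shows "(\<lambda>w. (let W = mmul D (Omega_full N d w) U in mmul D (mmul D W (R w)) (adj W)) i j) \<in> borel_measurable borel"
  unfolding Let_def mmul_def adj_def using assms omega_meas by measurable

lemma fold_meas:
  assumes "\<And>i j. (\<lambda>w. R w i j) \<in> borel_measurable borel"
  shows "(\<lambda>w. foldl (\<lambda>\<rho> U. let W = mmul D (Omega_full N d w) U in mmul D (mmul D W \<rho>) (adj W)) (R w) Us i j) \<in> borel_measurable borel"
  using assms
proof (induction Us arbitrary: R)
  case Nil thus ?case by simp
next
  case (Cons U Us)
  show ?case using Cons.IH[of "\<lambda>w. let W = mmul D (Omega_full N d w) U in mmul D (mmul D W (R w)) (adj W)"]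
    step_meas[OF Cons.prems] by simp
qed

lemma q_meas: "(\<lambda>w. outcome_prob N Q a w) \<in> borel_measurable borel"
proof -
  have "(\<lambda>w. final_state N Q w i j) \<in> borel_measurable borel" for i j
    unfolding final_state_def Let_def using fold_meas[of "\<lambda>w. init_state Q"] by (simp add: Let_def)
  thus ?thesis unfolding outcome_prob_def mtrace_def mmul_def by measurable
qed



lemma sum_split_add: fixes m n :: nat shows "(\<Sum>a<m+n. f a) = (\<Sum>a<m. f a) + (\<Sum>a<n. f (a + m) :: 'a::comm_monoid_add)"
  by (induction n) (simp_all add: add_ac)

lemma psd_scale: "psd D P \<Longrightarrow> c \<ge> 0 \<Longrightarrow> psd D (\<lambda>i j. complex_of_real c * P i j)"
proof -
  assume P: "psd D P" and c: "c \<ge> 0"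
  have "sesq D (\<lambda>i j. complex_of_real c * P i j) v v = complex_of_real c * sesq D P v v" for v
    by (simp add: sesq_def sum_distrib_left mult_ac)
  thus ?thesis using P c unfolding psd_sesq by simp
qed

lemma trace_scale: "mtrace D (mmul D (\<lambda>i j. complex_of_real c * P i j) R) = complex_of_real c * mtrace D (mmul D P R)"
  by (simp add: mtrace_def mmul_def sum_distrib_left mult_ac)

theorem theorem3:
  fixes N tf :: nat and C p :: "real \<Rightarrow> real" and b :: real and fs :: "real list"
  assumes diff1: "\<And>x. C differentiable (at x)"
    and diff2: "\<And>x. deriv C differentiable (at x)"
    and bound: "\<And>x. deriv (deriv C) x \<le> b"
    and nonneg: "\<And>x. C x \<ge> 0"
    and C0: "C 0 = 0"
    and mono_pos: "mono_on {0..} C \<or> antimono_on {0..} C"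
    and mono_neg: "mono_on {..0} C \<or> antimono_on {..0} C"
    and dens: "prob_density p"
    and fs_ne: "fs \<noteq> []"
    and fs_sorted: "sorted_wrt (<) fs"
  defines "M \<equiv> (\<lambda>\<omega>. if \<omega> \<le> hd fs then C (\<omega> - hd fs)
                 else if \<omega> \<ge> last fs then C (\<omega> - last fs) else 0)"
  shows "S_C N tf C p (set fs) \<le>
           S_C N tf C p UNIV
           + ennreal (Max (insert 0 {b / 8 * (fs ! (j + 1) - fs ! j)^2 | j. j + 1 < length fs}))
           + (\<integral>\<^sup>+ \<omega>. ennreal (M \<omega> * p \<omega>) \<partial>lborel)"
proof -
  define K where "K = Max (insert 0 {b / 8 * (fs ! (j + 1) - fs ! j)^2 | j. j + 1 < length fs})"
  define I where "I = (\<integral>\<^sup>+ \<omega>. ennreal (M \<omega> * p \<omega>) \<partial>lborel)"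
  have M_eq: "M = (\<lambda>\<omega>. if \<omega> \<le> hd fs then C (\<omega> - hd fs) else if \<omega> \<ge> last fs then C (\<omega> - last fs) else 0)"
    using M_def by simp
  have rnd: "\<forall>f. \<exists>g1 g2 l. g1 \<in> set fs \<and> g2 \<in> set fs \<and> 0 \<le> l \<and> l \<le> 1 \<and>
           (\<forall>w. l * C (w - g1) + (1 - l) * C (w - g2) \<le> C (w - f) + K + M w)"
    using round_exists[OF diff1 diff2 bound nonneg C0 mono_pos mono_neg fs_ne fs_sorted M_eq K_def] by blast
  obtain G1 G2 L where G1: "\<And>f. G1 f \<in> set fs" and G2: "\<And>f. G2 f \<in> set fs"
    and L0: "\<And>f. 0 \<le> L f" and L1: "\<And>f. L f \<le> 1"
    and GL: "\<And>f w. L f * C (w - G1 f) + (1 - L f) * C (w - G2 f) \<le> C (w - f) + K + M w"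
    using rnd by metis
  have K0: "K \<ge> 0"
  proof -
    have "finite {b / 8 * (fs ! (j + 1) - fs ! j)^2 | j. j + 1 < length fs}"
      by (rule finite_image_set, rule finite_subset[of _ "{..<length fs}"]) auto
    thus ?thesis unfolding K_def by simp
  qed
  have M0: "\<And>w. M w \<ge> 0" using nonneg by (simp add: M_eq)
  have Ccont: "continuous_on UNIV C"
    using diff1 by (simp add: continuous_at_imp_continuous_on differentiable_imp_continuous_within)
  have Cm[measurable]: "C \<in> borel_measurable borel" using Ccont by (rule borel_measurable_continuous_onI)
  have pm[measurable]: "p \<in> borel_measurable borel" and p0: "\<And>x. p x \<ge> 0"
    and p1: "(\<integral>\<^sup>+ x. ennreal (p x) \<partial>lborel) = 1" using dens by (auto simp: prob_density_def)
  have Mm[measurable]: "M \<in> borel_measurable borel" unfolding M_eq by measurable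
  have main: "S_C N tf C p (set fs) \<le> expected_cost N C p Q + (ennreal K + I)"
    if V: "valid_alg N tf UNIV Q" for Q
  proof -
    define m where "m = n_outcomes Q"
    define e where "e = estimate Q"
    define P' where "P' = (\<lambda>a. if a < m then (\<lambda>i j. complex_of_real (L (e a)) * povm_el Q a i j)
       else (\<lambda>i j. complex_of_real (1 - L (e (a - m))) * povm_el Q (a - m) i j))"
    define E' where "E' = (\<lambda>a. if a < m then G1 (e a) else G2 (e (a - m)))"
    define Q' where "Q' = Q\<lparr>n_outcomes := m + m, povm_el := P', estimate := E'\<rparr>"
    have dimQ': "alg_dim N Q' = alg_dim N Q" by (simp add: Q'_def alg_dim_def)
    have fsQ': "final_state N Q' = final_state N Q" by (rule ext) (simp add: Q'_def final_state_def alg_dim_def)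
    have nQ': "n_outcomes Q' = m + m" and eQ': "estimate Q' = E'" and pQ': "povm_el Q' = P'"
      by (simp_all add: Q'_def)
    let ?q = "\<lambda>a w. outcome_prob N Q a w"
    have q0: "\<And>a w. a < m \<Longrightarrow> ?q a w \<ge> 0" using q_nonneg[OF V] m_def by blast
    have qs: "\<And>w. (\<Sum>a<m. ?q a w) = 1" using q_sum[OF V] m_def by simp
    have qm[measurable]: "\<And>a. (\<lambda>w. ?q a w) \<in> borel_measurable borel" by (rule q_meas)
    have q1: "outcome_prob N Q' a w = L (e a) * ?q a w" if "a < m" for a w
      using that unfolding outcome_prob_def dimQ' fsQ' pQ' by (simp add: P'_def trace_scale)
    have q2: "outcome_prob N Q' (a + m) w = (1 - L (e a)) * ?q a w" for a w
      unfolding outcome_prob_def dimQ' fsQ' pQ' by (simp add: P'_def trace_scale del: of_real_diff)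
    have valid': "valid_alg N tf (set fs) Q'"
    proof -
      have ps: "psd (alg_dim N Q) (povm_el Q a)" if "a < m" for a
        using V that unfolding valid_alg_def povm_def m_def by blast
      have sm: "mat_eq (alg_dim N Q) (\<lambda>i j. \<Sum>a<m. povm_el Q a i j) idm"
        using V unfolding valid_alg_def povm_def m_def by blast
      have "(\<Sum>a<m+m. P' a i j) = (\<Sum>a<m. povm_el Q a i j)" for i j
      proof -
        have "(\<Sum>a<m+m. P' a i j) = (\<Sum>a<m. P' a i j) + (\<Sum>a<m. P' (a + m) i j)" by (rule sum_split_add)
        also have "\<dots> = (\<Sum>a<m. complex_of_real (L (e a)) * povm_el Q a i j + complex_of_real (1 - L (e a)) * povm_el Q a i j)"
          by (simp add: P'_def sum.distrib)
        also have "\<dots> = (\<Sum>a<m. povm_el Q a i j)" by (simp add: algebra_simps)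
        finally show ?thesis .
      qed
      hence "mat_eq (alg_dim N Q) (\<lambda>i j. \<Sum>a<m+m. P' a i j) idm" using sm by simp
      moreover have "psd (alg_dim N Q) (P' a)" if "a < m + m" for a
        using ps L0 L1 that by (auto simp: P'_def simp del: of_real_diff intro!: psd_scale)
      ultimately have "povm (alg_dim N Q') (n_outcomes Q') (povm_el Q')"
        unfolding povm_def dimQ' nQ' pQ' by blast
      moreover have "\<forall>a < n_outcomes Q'. estimate Q' a \<in> set fs" using G1 G2 by (simp add: eQ' E'_def)
      ultimately show ?thesis using V unfolding valid_alg_def dimQ' by (simp add: Q'_def)
    qed
    have "S_C N tf C p (set fs) \<le> expected_cost N C p Q'"
      unfolding S_C_def using valid' by (auto intro: INF_lower)
    also have "expected_cost N C p Q' = (\<Sum>a<m. \<integral>\<^sup>+ w. ennreal (C (w - G1 (e a)) * (L (e a) * ?q a w) * p w)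
                  + ennreal (C (w - G2 (e a)) * ((1 - L (e a)) * ?q a w) * p w) \<partial>lborel)"
    proof -
      have "expected_cost N C p Q' = (\<Sum>a<m+m. \<integral>\<^sup>+ w. ennreal (C (w - E' a) * outcome_prob N Q' a w * p w) \<partial>lborel)"
        unfolding expected_cost_def nQ' eQ' ..
      also have "\<dots> = (\<Sum>a<m. \<integral>\<^sup>+ w. ennreal (C (w - E' a) * outcome_prob N Q' a w * p w) \<partial>lborel)
          + (\<Sum>a<m. \<integral>\<^sup>+ w. ennreal (C (w - E' (a + m)) * outcome_prob N Q' (a + m) w * p w) \<partial>lborel)"
        by (rule sum_split_add)
      also have "\<dots> = (\<Sum>a<m. \<integral>\<^sup>+ w. ennreal (C (w - G1 (e a)) * (L (e a) * ?q a w) * p w) \<partial>lborel)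
          + (\<Sum>a<m. \<integral>\<^sup>+ w. ennreal (C (w - G2 (e a)) * ((1 - L (e a)) * ?q a w) * p w) \<partial>lborel)"
        by (intro arg_cong2[where f="(+)"] sum.cong refl) (simp_all add: E'_def q1 q2)
      also have "\<dots> = (\<Sum>a<m. \<integral>\<^sup>+ w. ennreal (C (w - G1 (e a)) * (L (e a) * ?q a w) * p w)
                  + ennreal (C (w - G2 (e a)) * ((1 - L (e a)) * ?q a w) * p w) \<partial>lborel)"
        by (simp add: sum.distrib[symmetric] nn_integral_add)
      finally show ?thesis .
    qed
    also have "\<dots> \<le> (\<Sum>a<m. \<integral>\<^sup>+ w. ennreal (C (w - e a) * ?q a w * p w)
                  + ennreal ((K + M w) * p w * ?q a w) \<partial>lborel)"
    proof (intro sum_mono nn_integral_mono)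
      fix a w assume a: "a \<in> {..<m}"
      have qa: "?q a w \<ge> 0" using q0 a by simp
      have "ennreal (C (w - G1 (e a)) * (L (e a) * ?q a w) * p w) + ennreal (C (w - G2 (e a)) * ((1 - L (e a)) * ?q a w) * p w)
          = ennreal ((L (e a) * C (w - G1 (e a)) + (1 - L (e a)) * C (w - G2 (e a))) * (?q a w * p w))"
      proof -
        have n1: "0 \<le> C (w - G1 (e a)) * (L (e a) * ?q a w) * p w"
          using qa p0[of w] L0[of "e a"] nonneg[of "w - G1 (e a)"] by simp
        have n2: "0 \<le> C (w - G2 (e a)) * ((1 - L (e a)) * ?q a w) * p w"
          using qa p0[of w] L1[of "e a"] nonneg[of "w - G2 (e a)"] by simp
        show ?thesis by (subst ennreal_plus[OF n1 n2, symmetric]) (simp add: algebra_simps)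
      qed
      also have "\<dots> \<le> ennreal ((C (w - e a) + K + M w) * (?q a w * p w))"
        using GL[of "e a" w] qa p0[of w] by (intro ennreal_leI mult_right_mono) auto
      also have "\<dots> = ennreal (C (w - e a) * ?q a w * p w) + ennreal ((K + M w) * p w * ?q a w)"
      proof -
        have n1: "0 \<le> C (w - e a) * ?q a w * p w" using qa p0[of w] nonneg[of "w - e a"] by simp
        have n2: "0 \<le> (K + M w) * p w * ?q a w" using qa p0[of w] K0 M0[of w] by simp
        show ?thesis by (subst ennreal_plus[OF n1 n2, symmetric]) (simp add: algebra_simps)
      qed
      finally show "ennreal (C (w - G1 (e a)) * (L (e a) * ?q a w) * p w) + ennreal (C (w - G2 (e a)) * ((1 - L (e a)) * ?q a w) * p w)
          \<le> ennreal (C (w - e a) * ?q a w * p w) + ennreal ((K + M w) * p w * ?q a w)" .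
    qed
    also have "\<dots> = expected_cost N C p Q + (\<Sum>a<m. \<integral>\<^sup>+ w. ennreal ((K + M w) * p w * ?q a w) \<partial>lborel)"
      unfolding expected_cost_def m_def[symmetric] e_def[symmetric]
      by (simp add: sum.distrib nn_integral_add)
    also have "(\<Sum>a<m. \<integral>\<^sup>+ w. ennreal ((K + M w) * p w * ?q a w) \<partial>lborel) = (\<integral>\<^sup>+ w. ennreal ((K + M w) * p w) \<partial>lborel)"
    proof -
      have "(\<Sum>a<m. \<integral>\<^sup>+ w. ennreal ((K + M w) * p w * ?q a w) \<partial>lborel) = (\<integral>\<^sup>+ w. (\<Sum>a<m. ennreal ((K + M w) * p w * ?q a w)) \<partial>lborel)"
        by (rule nn_integral_sum[symmetric]) measurable
      also have "\<dots> = (\<integral>\<^sup>+ w. ennreal ((K + M w) * p w) \<partial>lborel)"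
      proof (rule nn_integral_cong)
        fix w
        have "(\<Sum>a<m. ennreal ((K + M w) * p w * ?q a w)) = ennreal (\<Sum>a<m. (K + M w) * p w * ?q a w)"
          using q0 K0 M0[of w] p0[of w] by (intro sum_ennreal) auto
        also have "(\<Sum>a<m. (K + M w) * p w * ?q a w) = (K + M w) * p w"
          using qs[of w] by (simp add: sum_distrib_left[symmetric])
        finally show "(\<Sum>a<m. ennreal ((K + M w) * p w * ?q a w)) = ennreal ((K + M w) * p w)" .
      qed
      finally show ?thesis .
    qed
    also have "(\<integral>\<^sup>+ w. ennreal ((K + M w) * p w) \<partial>lborel) = ennreal K + I"
    proof -
      have "(\<integral>\<^sup>+ w. ennreal ((K + M w) * p w) \<partial>lborel) = (\<integral>\<^sup>+ w. ennreal K * ennreal (p w) + ennreal (M w * p w) \<partial>lborel)"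
        using K0 M0 p0 by (intro nn_integral_cong) (simp add: distrib_right ennreal_mult)
      also have "\<dots> = ennreal K * (\<integral>\<^sup>+ w. ennreal (p w) \<partial>lborel) + I"
        unfolding I_def by (simp add: nn_integral_add nn_integral_cmult)
      finally show ?thesis using p1 by simp
    qed
    finally show ?thesis .
  qed
  have goal: "S_C N tf C p (set fs) \<le> S_C N tf C p UNIV + (ennreal K + I)"
  proof (cases "ennreal K + I = top")
    case True thus ?thesis by simp
  next
    case False
    have "S_C N tf C p (set fs) - (ennreal K + I) \<le> expected_cost N C p Q" if "valid_alg N tf UNIV Q" for Q
      using main[OF that] False by (simp add: ennreal_minus_le_iff add.commute)
    hence "S_C N tf C p (set fs) - (ennreal K + I) \<le> S_C N tf C p UNIV"
      unfolding S_C_def[of _ _ _ _ UNIV] by (auto intro: INF_greatest)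
    thus ?thesis using False by (simp add: ennreal_minus_le_iff add.commute)
  qed
  thus ?thesis unfolding K_def I_def by (simp add: add.assoc)
qed

end
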